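(* Let $S$ be a monoid with zero and let $A_S$ be a semi-simple right $S$-act. The following are equivalent: (i) $A_S$ is Rees artinian; (ii) $A_S$ is finitely Rees cogenerated; (iii) $A_S$ is finitely generated; (iv) $A_S$ is Rees noetherian.
   Context: An $S$-act is $\theta$-simple if its only subacts are itself and a one-element subact. Over a monoid with zero, an $S$-act is semi-simple if it is a coproduct in the category $S$-Act$_0$ (acts with a distinguished zero; coproduct = union of the acts glued along their common zero) of $\theta$-simple acts; equivalently, each of its subacts is a $0$-direct summand. For a subact $B$, $\rho_B=(B\times B)\cup\Delta_A$. $A_S$ is finitely Rees cogenerated if whenever $\bigcap_{i\in I}\rho_{B_i}=\Delta_A$ for subacts $B_i$, already $\bigcap_{j\in J}\rho_{B_j}=\Delta_A$ for some finite $J\subseteq I$. Rees artinian (noetherian) means the descending (ascending) chain condition on subacts. *)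

theory Defs
  imports Main
begin

definition right_act :: "'a set \<Rightarrow> ('a \<Rightarrow> 's::monoid_mult \<Rightarrow> 'a) \<Rightarrow> bool" where
  "right_act A act \<longleftrightarrow>
     (\<forall>a\<in>A. \<forall>s. act a s \<in> A) \<and>
     (\<forall>a\<in>A. act a 1 = a) \<and>
     (\<forall>a\<in>A. \<forall>s t. act (act a s) t = act a (s * t))"

definition act0 :: "'a set \<Rightarrow> ('a \<Rightarrow> 's::monoid_mult \<Rightarrow> 'a) \<Rightarrow> 'a \<Rightarrow> bool" where
  "act0 A act \<theta> \<longleftrightarrow> right_act A act \<and> \<theta> \<in> A \<and> (\<forall>s. act \<theta> s = \<theta>)"

definition subact :: "'a set \<Rightarrow> 'a set \<Rightarrow> ('a \<Rightarrow> 's::monoid_mult \<Rightarrow> 'a) \<Rightarrow> bool" where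
  "subact B A act \<longleftrightarrow> B \<noteq> {} \<and> B \<subseteq> A \<and> (\<forall>b\<in>B. \<forall>s. act b s \<in> B)"

definition theta_simple :: "'a set \<Rightarrow> ('a \<Rightarrow> 's::monoid_mult \<Rightarrow> 'a) \<Rightarrow> 'a \<Rightarrow> bool" where
  "theta_simple B act \<theta> \<longleftrightarrow> (\<forall>C. subact C B act \<longrightarrow> C = B \<or> C = {\<theta>})"

text \<open>Semi-simple: A is the coproduct in S-Act_0 of theta-simple acts, i.e. A is the
union of theta-simple subacts (each containing theta) pairwise intersecting exactly in {theta}.\<close>
definition semisimple :: "'a set \<Rightarrow> ('a \<Rightarrow> 's::{monoid_mult,mult_zero} \<Rightarrow> 'a) \<Rightarrow> 'a \<Rightarrow> bool" where
  "semisimple A act \<theta> \<longleftrightarrow> act0 A act \<theta> \<and>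
     (\<exists>\<B>. (\<forall>B\<in>\<B>. subact B A act \<and> \<theta> \<in> B \<and> theta_simple B act \<theta>) \<and>
          \<Union>\<B> = A \<and>
          (\<forall>B\<in>\<B>. \<forall>C\<in>\<B>. B \<noteq> C \<longrightarrow> B \<inter> C = {\<theta>}))"

definition rees_cong :: "'a set \<Rightarrow> 'a set \<Rightarrow> ('a \<times> 'a) set" where
  "rees_cong A B = (B \<times> B) \<union> Id_on A"

definition fin_rees_cogen :: "'a set \<Rightarrow> ('a \<Rightarrow> 's::monoid_mult \<Rightarrow> 'a) \<Rightarrow> bool" where
  "fin_rees_cogen A act \<longleftrightarrow>
     (\<forall>\<B>. (\<forall>B\<in>\<B>. subact B A act) \<longrightarrow>
        (A \<times> A) \<inter> (\<Inter>B\<in>\<B>. rees_cong A B) = Id_on A \<longrightarrow>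
        (\<exists>\<J>. finite \<J> \<and> \<J> \<subseteq> \<B> \<and> (A \<times> A) \<inter> (\<Inter>B\<in>\<J>. rees_cong A B) = Id_on A))"

definition fin_generated :: "'a set \<Rightarrow> ('a \<Rightarrow> 's::monoid_mult \<Rightarrow> 'a) \<Rightarrow> bool" where
  "fin_generated A act \<longleftrightarrow> (\<exists>X. finite X \<and> X \<subseteq> A \<and> A = {act x s | x s. x \<in> X})"

definition rees_artinian :: "'a set \<Rightarrow> ('a \<Rightarrow> 's::monoid_mult \<Rightarrow> 'a) \<Rightarrow> bool" where
  "rees_artinian A act \<longleftrightarrow>
     (\<forall>C :: nat \<Rightarrow> 'a set. (\<forall>n. subact (C n) A act \<and> C (Suc n) \<subseteq> C n) \<longrightarrow>
        (\<exists>m. \<forall>n\<ge>m. C n = C m))"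

definition rees_noetherian :: "'a set \<Rightarrow> ('a \<Rightarrow> 's::monoid_mult \<Rightarrow> 'a) \<Rightarrow> bool" where
  "rees_noetherian A act \<longleftrightarrow>
     (\<forall>C :: nat \<Rightarrow> 'a set. (\<forall>n. subact (C n) A act \<and> C n \<subseteq> C (Suc n)) \<longrightarrow>
        (\<exists>m. \<forall>n\<ge>m. C n = C m))"

end

theory Submission
  imports Defs
begin

locale ssa =
  fixes A :: "'a set" and act :: "'a \<Rightarrow> 's::{monoid_mult,mult_zero} \<Rightarrow> 'a" and \<theta> :: 'a
    and BB :: "'a set set"
  assumes ra: "right_act A act" and thA: "\<theta> \<in> A" and th: "\<And>s. act \<theta> s = \<theta>"
    and BBsub: "\<And>B. B \<in> BB \<Longrightarrow> subact B A act"
    and BBth: "\<And>B. B \<in> BB \<Longrightarrow> \<theta> \<in> B"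
    and BBsimp: "\<And>B. B \<in> BB \<Longrightarrow> theta_simple B act \<theta>"
    and BBun: "\<Union>BB = A"
    and BBdisj: "\<And>B C. B \<in> BB \<Longrightarrow> C \<in> BB \<Longrightarrow> B \<noteq> C \<Longrightarrow> B \<inter> C = {\<theta>}"
begin

definition P where "P = {B\<in>BB. B \<noteq> {\<theta>}}"

lemma actA: "a \<in> A \<Longrightarrow> act a s \<in> A" using ra unfolding right_act_def by blast
lemma act1: "a \<in> A \<Longrightarrow> act a 1 = a" using ra unfolding right_act_def by blast
lemma actc: "a \<in> A \<Longrightarrow> act (act a s) t = act a (s*t)" using ra unfolding right_act_def by blast

lemma L1:
  assumes B: "B \<in> BB" and b: "b \<in> B" and nb: "b \<noteq> \<theta>"
  shows "range (act b) = B"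
proof -
  have sB: "subact B A act" using BBsub B .
  hence bA: "b \<in> A" using b unfolding subact_def by blast
  have "subact (range (act b)) B act"
    unfolding subact_def using sB b bA actc
    by (auto simp: subact_def)
  hence "range (act b) = B \<or> range (act b) = {\<theta>}"
    using BBsimp[OF B] unfolding theta_simple_def by blast
  moreover have "b \<in> range (act b)" using act1[OF bA] by (metis rangeI)
  ultimately show ?thesis using nb by blast
qed

lemma L2:
  assumes C: "subact C A act" and c: "c \<in> C" and nc: "c \<noteq> \<theta>"
  shows "\<exists>B\<in>P. c \<in> B \<and> B \<subseteq> C"
proof -
  have "c \<in> A" using C c unfolding subact_def by blast
  then obtain B where B: "B \<in> BB" "c \<in> B" using BBun by blast
  have "range (act c) = B" using L1[OF B nc] .
  moreover have "range (act c) \<subseteq> C" using C c unfolding subact_def by blast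
  moreover have "B \<in> P" using B nc unfolding P_def by blast
  ultimately show ?thesis using B by blast
qed

lemma L3:
  assumes C: "subact C A act" shows "\<theta> \<in> C"
proof -
  obtain c where c: "c \<in> C" using C unfolding subact_def by blast
  show ?thesis
  proof (cases "c = \<theta>")
    case True then show ?thesis using c by simp
  next
    case False
    then obtain B where "B \<in> P" "B \<subseteq> C" using L2[OF C c] by blast
    then show ?thesis using BBth unfolding P_def by blast
  qed
qed

definition T where "T C = {B\<in>P. B \<subseteq> C}"

lemma L4: assumes C: "subact C A act" shows "C = insert \<theta> (\<Union>(T C))"
proof
  show "C \<subseteq> insert \<theta> (\<Union>(T C))"
  proof
    fix c assume "c \<in> C"
    then show "c \<in> insert \<theta> (\<Union>(T C))" using L2[OF C] unfolding T_def by blast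
  qed
  show "insert \<theta> (\<Union>(T C)) \<subseteq> C" using L3[OF C] unfolding T_def by blast
qed

lemma L5: assumes "U \<subseteq> P" shows "subact (insert \<theta> (\<Union>U)) A act"
  unfolding subact_def
proof (intro conjI ballI allI)
  show "insert \<theta> (\<Union> U) \<noteq> {}" by simp
  show "insert \<theta> (\<Union> U) \<subseteq> A" using assms thA BBun unfolding P_def by blast
  fix b s assume b: "b \<in> insert \<theta> (\<Union> U)"
  show "act b s \<in> insert \<theta> (\<Union> U)"
  proof (cases "b = \<theta>")
    case True then show ?thesis using th by simp
  next
    case False
    then obtain B where "B \<in> U" "b \<in> B" using b by blast
    moreover then have "subact B A act" using assms BBsub unfolding P_def by blast
    ultimately show ?thesis unfolding subact_def by blast
  qed
qed

lemma L6: assumes U: "U \<subseteq> P" and B: "B \<in> P" and sub: "B \<subseteq> insert \<theta> (\<Union>U)"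
  shows "B \<in> U"
proof (rule ccontr)
  assume nB: "B \<notin> U"
  obtain b where b: "b \<in> B" "b \<noteq> \<theta>" using B BBth unfolding P_def by blast
  then obtain B' where B': "B' \<in> U" "b \<in> B'" using sub by blast
  have "B \<noteq> B'" using nB B' by blast
  hence "B \<inter> B' = {\<theta>}" using BBdisj B B' U unfolding P_def by blast
  thus False using b B' by blast
qed

lemma TL5: assumes "U \<subseteq> P" shows "T (insert \<theta> (\<Union>U)) = U"
  using L6[OF assms] assms unfolding T_def by blast

lemma Tsub: "T C \<subseteq> P" unfolding T_def by blast
lemma Tmono: "C \<subseteq> D \<Longrightarrow> T C \<subseteq> T D" unfolding T_def by blast

lemma subacts_eq: "subact C A act \<Longrightarrow> subact D A act \<Longrightarrow> T C = T D \<Longrightarrow> C = D"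
  using L4 by metis

lemma Pfin_single: assumes "x \<noteq> \<theta>" shows "finite {B\<in>BB. x \<in> B}"
proof (cases "{B\<in>BB. x \<in> B} = {}")
  case True then show ?thesis by (metis finite.emptyI)
next
  case False
  then obtain B0 where B0: "B0 \<in> BB" "x \<in> B0" by blast
  have "{B\<in>BB. x \<in> B} \<subseteq> {B0}" using BBdisj B0 assms by blast
  then show ?thesis using finite_subset by blast
qed

lemma fg_iff: "fin_generated A act \<longleftrightarrow> finite P"
proof
  assume "fin_generated A act"
  then obtain X where X: "finite X" "X \<subseteq> A" "A = {act x s | x s. x \<in> X}"
    unfolding fin_generated_def by blast
  have "P \<subseteq> (\<Union>x\<in>{x\<in>X. x \<noteq> \<theta>}. {B\<in>BB. x \<in> B})"
  proof
    fix B assume B: "B \<in> P"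
    then obtain b where b: "b \<in> B" "b \<noteq> \<theta>" using BBth unfolding P_def by blast
    have "b \<in> A" using B b BBsub unfolding P_def subact_def by blast
    then obtain x s where xs: "x \<in> X" "b = act x s" using X(3) by blast
    have xt: "x \<noteq> \<theta>" using xs b th by auto
    obtain B' where B': "B' \<in> BB" "x \<in> B'" using xs X(2) BBun by blast
    have "b \<in> B'" using B' BBsub xs unfolding subact_def by blast
    hence "B = B'" using BBdisj B B' b unfolding P_def by blast
    thus "B \<in> (\<Union>x\<in>{x\<in>X. x \<noteq> \<theta>}. {B\<in>BB. x \<in> B})" using B' xs xt by blast
  qed
  moreover have "finite (\<Union>x\<in>{x\<in>X. x \<noteq> \<theta>}. {B\<in>BB. x \<in> B})"
    using X(1) Pfin_single by auto
  ultimately show "finite P" using finite_subset by blast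
next
  assume fP: "finite P"
  define g where "g B = (SOME b. b \<in> B \<and> b \<noteq> \<theta>)" for B
  have g: "g B \<in> B \<and> g B \<noteq> \<theta>" if "B \<in> P" for B
  proof -
    have "\<exists>b. b \<in> B \<and> b \<noteq> \<theta>" using that BBth unfolding P_def by blast
    thus ?thesis unfolding g_def by (rule someI_ex)
  qed
  define X where "X = insert \<theta> (g ` P)"
  have XA: "X \<subseteq> A" unfolding X_def using thA g BBun unfolding P_def by blast
  have Aeq: "A = {act x s | x s. x \<in> X}"
  proof
    show "{act x s | x s. x \<in> X} \<subseteq> A" using XA actA by blast
    show "A \<subseteq> {act x s | x s. x \<in> X}"
    proof
      fix a assume a: "a \<in> A"
      show "a \<in> {act x s | x s. x \<in> X}"
      proof (cases "a = \<theta>")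
        case True
        have "a = act \<theta> 1" using True th by simp
        then show ?thesis unfolding X_def by blast
      next
        case False
        obtain B where B: "B \<in> BB" "a \<in> B" using a BBun by blast
        hence BP: "B \<in> P" using False unfolding P_def by blast
        have "range (act (g B)) = B" using L1[OF B(1)] g[OF BP] by blast
        then obtain s where "a = act (g B) s" using B by blast
        then show ?thesis using BP unfolding X_def by blast
      qed
    qed
  qed
  have "finite X" unfolding X_def using fP by simp
  then show "fin_generated A act" unfolding fin_generated_def
    using XA Aeq by blast
qed

lemma fin_subacts: assumes fP: "finite P" and CC: "\<forall>C\<in>CC. subact C A act"
  shows "finite CC"
proof -
  have "inj_on T CC"
  proof (rule inj_onI)
    fix x y assume "x \<in> CC" "y \<in> CC" "T x = T y"
    then show "x = y" using subacts_eq CC by blast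
  qed
  moreover have "T ` CC \<subseteq> Pow P" using Tsub by blast
  hence "finite (T ` CC)" using fP finite_subset by blast
  ultimately show ?thesis using finite_imageD by blast
qed

definition E where "E B = insert \<theta> (\<Union>(P - {B}))"

lemma E_sub: "subact (E B) A act" unfolding E_def by (rule L5) (rule Diff_subset)

lemma cogen_iff: "fin_rees_cogen A act \<longleftrightarrow> finite P"
proof
  assume fc: "fin_rees_cogen A act"
  show "finite P"
  proof (rule ccontr)
    assume inf: "infinite P"
    define CC where "CC = E ` P"
    have CCs: "\<forall>C\<in>CC. subact C A act" unfolding CC_def using E_sub by blast
    have "(A \<times> A) \<inter> (\<Inter>C\<in>CC. rees_cong A C) = Id_on A"
    proof
      show "Id_on A \<subseteq> (A \<times> A) \<inter> (\<Inter>C\<in>CC. rees_cong A C)"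
        unfolding rees_cong_def by blast
      show "(A \<times> A) \<inter> (\<Inter>C\<in>CC. rees_cong A C) \<subseteq> Id_on A"
      proof
        fix p assume p: "p \<in> (A \<times> A) \<inter> (\<Inter>C\<in>CC. rees_cong A C)"
        obtain x y where xy: "p = (x,y)" by (cases p)
        have key: "z = \<theta>" if z: "z \<in> A" "\<forall>B\<in>P. z \<in> E B" for z
        proof (rule ccontr)
          assume zt: "z \<noteq> \<theta>"
          obtain B0 where B0: "B0 \<in> BB" "z \<in> B0" using z BBun by blast
          hence B0P: "B0 \<in> P" using zt unfolding P_def by blast
          have "z \<in> E B0" using z B0P by blast
          then obtain B' where "B' \<in> P - {B0}" "z \<in> B'" using zt unfolding E_def by blast
          moreover have "B' \<in> BB" "B' \<noteq> B0" using calculation unfolding P_def by blast+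
          ultimately have "B0 \<inter> B' = {\<theta>}" using BBdisj[of B0 B'] B0 by blast
          thus False using \<open>z \<in> B'\<close> B0 zt by blast
        qed
        show "p \<in> Id_on A"
        proof (cases "x = y")
          case True then show ?thesis using p xy by auto
        next
          case False
          have "\<forall>B\<in>P. x \<in> E B \<and> y \<in> E B"
          proof
            fix B assume "B \<in> P"
            hence "(x,y) \<in> rees_cong A (E B)" using p xy unfolding CC_def by blast
            thus "x \<in> E B \<and> y \<in> E B" using False unfolding rees_cong_def by blast
          qed
          moreover have "x \<in> A" "y \<in> A" using p xy by auto
          ultimately have "x = \<theta>" "y = \<theta>" using key[of x] key[of y] by blast+
          then show ?thesis using False by simp
        qed
      qed
    qed
    note I = this
    have "\<exists>J. finite J \<and> J \<subseteq> CC \<and> (A \<times> A) \<inter> (\<Inter>C\<in>J. rees_cong A C) = Id_on A"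
      by (rule fc[unfolded fin_rees_cogen_def, THEN spec, THEN mp, THEN mp]) (rule CCs, rule I)
    then obtain J where J: "finite J" "J \<subseteq> CC" "(A \<times> A) \<inter> (\<Inter>C\<in>J. rees_cong A C) = Id_on A"
      by (elim exE conjE)
    obtain P0 where P0: "P0 \<subseteq> P" "finite P0" "J = E ` P0"
    proof -
      have "J \<subseteq> E ` P" using J(2) unfolding CC_def .
      from finite_subset_image[OF J(1) this] show ?thesis using that by (elim exE conjE)
    qed
    have "\<not> P \<subseteq> P0" using inf P0(2) by (metis finite_subset)
    then obtain B1 where B1: "B1 \<in> P" "B1 \<notin> P0" by blast
    obtain b where b: "b \<in> B1" "b \<noteq> \<theta>" using B1 BBth unfolding P_def by blast
    have bA: "b \<in> A" using b B1 BBun unfolding P_def by blast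
    have "(\<theta>, b) \<in> rees_cong A C" if C: "C \<in> J" for C
    proof -
      obtain B where B: "B \<in> P0" "C = E B" using C P0(3) by blast
      have "B1 \<in> P - {B}" using B B1 by blast
      hence "b \<in> C" "\<theta> \<in> C" using b B(2) unfolding E_def by blast+
      thus ?thesis unfolding rees_cong_def by blast
    qed
    hence "(\<theta>, b) \<in> (A \<times> A) \<inter> (\<Inter>C\<in>J. rees_cong A C)"
      using bA thA by blast
    thus False using J(3) b by auto
  qed
next
  assume fP: "finite P"
  show "fin_rees_cogen A act" unfolding fin_rees_cogen_def
  proof (intro allI impI)
    fix CC :: "'a set set"
    assume CC: "\<forall>B\<in>CC. subact B A act" and I: "(A \<times> A) \<inter> (\<Inter>B\<in>CC. rees_cong A B) = Id_on A"
    have "finite CC" using fin_subacts[OF fP CC] .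
    with I show "\<exists>J. finite J \<and> J \<subseteq> CC \<and> (A \<times> A) \<inter> (\<Inter>B\<in>J. rees_cong A B) = Id_on A"
      by (intro exI[of _ CC]) simp
  qed
qed

lemma art_fin: assumes fP: "finite P" shows "rees_artinian A act"
  unfolding rees_artinian_def
proof (intro allI impI)
  fix C :: "nat \<Rightarrow> 'a set"
  assume C: "\<forall>n. subact (C n) A act \<and> C (Suc n) \<subseteq> C n"
  obtain m where m: "\<forall>n. card (T (C m)) \<le> card (T (C n))"
    using ex_has_least_nat[of "\<lambda>_. True" 0 "\<lambda>n. card (T (C n))"] by blast
  have "C n = C m" if "n \<ge> m" for n
  proof -
    have "C n \<subseteq> C m" using lift_Suc_antimono_le[of C m n] C that by blast
    hence s: "T (C n) \<subseteq> T (C m)" by (rule Tmono)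
    have "finite (T (C m))" using fP Tsub by (rule finite_subset[rotated])
    hence "T (C n) = T (C m)" using s m by (intro card_seteq) auto
    thus ?thesis using subacts_eq C by blast
  qed
  thus "\<exists>m. \<forall>n\<ge>m. C n = C m" by blast
qed

lemma noeth_fin: assumes fP: "finite P" shows "rees_noetherian A act"
  unfolding rees_noetherian_def
proof (intro allI impI)
  fix C :: "nat \<Rightarrow> 'a set"
  assume C: "\<forall>n. subact (C n) A act \<and> C n \<subseteq> C (Suc n)"
  have bd: "card (T (C n)) < Suc (card P)" for n
    using le_imp_less_Suc[OF card_mono[OF fP Tsub]] .
  obtain m where m: "\<forall>n. card (T (C n)) \<le> card (T (C m))"
    using ex_has_greatest_nat[of "\<lambda>_. True" 0 "\<lambda>n. card (T (C n))" "Suc (card P)"] bd by blast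
  have "C n = C m" if "n \<ge> m" for n
  proof -
    have "C m \<subseteq> C n" using lift_Suc_mono_le[of C m n] C that by blast
    hence s: "T (C m) \<subseteq> T (C n)" by (rule Tmono)
    have "finite (T (C n))" using fP Tsub by (rule finite_subset[rotated])
    hence "T (C m) = T (C n)" using s m by (intro card_seteq) auto
    hence "T (C n) = T (C m)" by simp
    thus ?thesis using subacts_eq C by blast
  qed
  thus "\<exists>m. \<forall>n\<ge>m. C n = C m" by blast
qed

lemma fin_art: assumes a: "rees_artinian A act" shows "finite P"
proof (rule ccontr)
  assume "infinite P"
  then obtain f :: "nat \<Rightarrow> 'a set" where f: "inj f" "range f \<subseteq> P"
    using infinite_countable_subset by blast
  define C where "C n = insert \<theta> (\<Union>(P - f ` {..<n}))" for n
  have "subact (C n) A act \<and> C (Suc n) \<subseteq> C n" for n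
  proof
    show "subact (C n) A act" unfolding C_def by (rule L5) (rule Diff_subset)
    have "P - f ` {..<Suc n} \<subseteq> P - f ` {..<n}" by (intro Diff_mono subset_refl image_mono) auto
    thus "C (Suc n) \<subseteq> C n" unfolding C_def by (intro insert_mono Union_mono)
  qed
  then obtain m where m: "\<forall>n\<ge>m. C n = C m" using a unfolding rees_artinian_def by blast
  have T1: "T (C n) = P - f ` {..<n}" for n unfolding C_def by (rule TL5) (rule Diff_subset)
  have "f m \<in> T (C m)" unfolding T1 using f by (simp add: inj_image_mem_iff[OF f(1)] image_subset_iff)
  moreover have "f m \<notin> T (C (Suc m))" unfolding T1 by simp
  moreover have "C (Suc m) = C m" by (rule m[rule_format]) simp
  ultimately show False by simp
qed

lemma fin_noeth: assumes a: "rees_noetherian A act" shows "finite P"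
proof (rule ccontr)
  assume "infinite P"
  then obtain f :: "nat \<Rightarrow> 'a set" where f: "inj f" "range f \<subseteq> P"
    using infinite_countable_subset by blast
  define C where "C n = insert \<theta> (\<Union>(f ` {..<n}))" for n
  have fs: "f ` {..<n} \<subseteq> P" for n using f by blast
  have "subact (C n) A act \<and> C n \<subseteq> C (Suc n)" for n
  proof
    show "subact (C n) A act" unfolding C_def by (rule L5[OF fs])
    have "f ` {..<n} \<subseteq> f ` {..<Suc n}" by (intro image_mono) auto
    thus "C n \<subseteq> C (Suc n)" unfolding C_def by (intro insert_mono Union_mono)
  qed
  then obtain m where m: "\<forall>n\<ge>m. C n = C m" using a unfolding rees_noetherian_def by blast
  have T1: "T (C n) = f ` {..<n}" for n unfolding C_def by (rule TL5[OF fs])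
  have "f m \<notin> T (C m)" unfolding T1 by (simp add: inj_image_mem_iff[OF f(1)])
  moreover have "f m \<in> T (C (Suc m))" unfolding T1 by simp
  moreover have "C (Suc m) = C m" by (rule m[rule_format]) simp
  ultimately show False by simp
qed

end

theorem mainTheorem8:
  fixes A :: "'a set" and act :: "'a \<Rightarrow> 's::{monoid_mult,mult_zero} \<Rightarrow> 'a" and \<theta> :: 'a
  assumes "semisimple A act \<theta>"
  shows "(rees_artinian A act \<longleftrightarrow> fin_rees_cogen A act) \<and>
         (fin_rees_cogen A act \<longleftrightarrow> fin_generated A act) \<and>
         (fin_generated A act \<longleftrightarrow> rees_noetherian A act)"
proof -
  have ex: "\<exists>BB. (\<forall>B\<in>BB. subact B A act \<and> \<theta> \<in> B \<and> theta_simple B act \<theta>) \<and>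
          \<Union>BB = A \<and> (\<forall>B\<in>BB. \<forall>C\<in>BB. B \<noteq> C \<longrightarrow> B \<inter> C = {\<theta>})"
    using assms unfolding semisimple_def by (rule conjunct2)
  have a0: "act0 A act \<theta>" using assms unfolding semisimple_def by (rule conjunct1)
  from ex obtain BB where BB0: "(\<forall>B\<in>BB. subact B A act \<and> \<theta> \<in> B \<and> theta_simple B act \<theta>) \<and>
          \<Union>BB = A \<and> (\<forall>B\<in>BB. \<forall>C\<in>BB. B \<noteq> C \<longrightarrow> B \<inter> C = {\<theta>})" by (elim exE)
  have BB1: "\<forall>B\<in>BB. subact B A act \<and> \<theta> \<in> B \<and> theta_simple B act \<theta>" using BB0 by (rule conjunct1)
  have BB2: "\<Union>BB = A" using BB0 by simp
  have BB3: "\<forall>B\<in>BB. \<forall>C\<in>BB. B \<noteq> C \<longrightarrow> B \<inter> C = {\<theta>}" using BB0 by simp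
  interpret ssa A act \<theta> BB
  proof
    show "right_act A act" "\<theta> \<in> A" "\<And>s. act \<theta> s = \<theta>" using a0 unfolding act0_def by auto
    show "\<And>B. B \<in> BB \<Longrightarrow> subact B A act" "\<And>B. B \<in> BB \<Longrightarrow> \<theta> \<in> B"
      "\<And>B. B \<in> BB \<Longrightarrow> theta_simple B act \<theta>" "\<Union>BB = A"
      "\<And>B C. B \<in> BB \<Longrightarrow> C \<in> BB \<Longrightarrow> B \<noteq> C \<Longrightarrow> B \<inter> C = {\<theta>}"
      using BB1 BB2 BB3 by blast+
  qed
  have e1: "rees_artinian A act \<longleftrightarrow> finite P" using fin_art art_fin by (rule iffI)
  have e2: "rees_noetherian A act \<longleftrightarrow> finite P" using fin_noeth noeth_fin by (rule iffI)
  show ?thesis unfolding e1 e2 fg_iff cogen_iff by simp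
qed

end
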